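(* Let $U$ be a Banach space with a normalized unconditional basis $(e_j)_{j=1}^\infty$ whose associated coordinate functionals $(e_j^* )$ form an unconditional weak$^*$ Schauder basis of $U^*$, and suppose $U^*$ with $(e_j^* )$ satisfies condition (C). Let $\Lambda\subset\mathbb{N}$ be infinite, $\eta>0$ and $\varphi\in U^{**}$. Then there exists an infinite set $\mathcal{A}\subset\Lambda$ such that $$\sup_{\|x^*\|_{U^*}\le1}|\langle\varphi,P_{\mathcal{A}}x^*\rangle|\le\eta.$$
   Context: Weak$^*$ Schauder basis: the coordinate functionals $(e_j^* )\subset U^*$ of $(e_j)$ satisfy $x^* = \text{weak}^*\text{-}\lim_n\sum_{j=1}^n\langle x^*,e_j\rangle e_j^*$ for all $x^*\in U^*$; series in $U^*$ are weak$^*$ limits. Unconditional: there is $C\ge1$ with $\|\sum_j\gamma_ja_je_j^*\|\le C\sup_j|\gamma_j|\,\|\sum_ja_je_j^*\|$ for all bounded $(\gamma_j)$; $K_u$ is the best such $C$. For $\mathcal{A}\subset\mathbb{N}$, $P_{\mathcal{A}}(\sum_ja_je_j^* )=\sum_{j\in\mathcal{A}}a_je_j^*$. Condition (C) (with $(e_j^* )$ normalized): for every infinite $\Lambda\subset\mathbb{N}$ and every $\theta>0$ there is a sequence $(\mathcal{A}_j)$ of pairwise disjoint infinite subsets of $\Lambda$ such that for every $(x_j^* )\subset U^*$ with $\|x_j^*\|\le1$ there are scalars $(a_j)\in\ell^1$ with $\|(a_j)\|_{\ell^1}=1$ and $\|\sum_{j=1}^\infty a_jP_{\mathcal{A}_j}x_j^*\|_{U^*}\le\theta$.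 *)

theory Defs
  imports "HOL-Analysis.Analysis"
begin

text \<open>Real Banach space U is a type 'a::banach; its dual U* is 'a \<Rightarrow>L real,
  the bidual is ('a \<Rightarrow>L real) \<Rightarrow>L real. Indices run over nat (starting at 0).\<close>

definition schauder_basis :: "(nat \<Rightarrow> 'a::real_normed_vector) \<Rightarrow> bool" where
  "schauder_basis e \<longleftrightarrow>
     (\<forall>x. \<exists>!c. (\<lambda>n. \<Sum>j<n. c j *\<^sub>R e j) \<longlonglongrightarrow> x)"

definition coordinate_functionals ::
    "(nat \<Rightarrow> 'a::real_normed_vector) \<Rightarrow> (nat \<Rightarrow> ('a \<Rightarrow>\<^sub>L real)) \<Rightarrow> bool" where
  "coordinate_functionals e es \<longleftrightarrow>
     (\<forall>x. (\<lambda>n. \<Sum>j<n. blinfun_apply (es j) x *\<^sub>R e j) \<longlonglongrightarrow> x)"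

definition unconditional_basis ::
    "(nat \<Rightarrow> 'a::real_normed_vector) \<Rightarrow> (nat \<Rightarrow> ('a \<Rightarrow>\<^sub>L real)) \<Rightarrow> bool" where
  "unconditional_basis e es \<longleftrightarrow>
     (\<exists>C\<ge>1. \<forall>x (\<gamma>::nat \<Rightarrow> real) M. (\<forall>j. \<bar>\<gamma> j\<bar> \<le> M) \<longrightarrow>
        (\<exists>y. (\<lambda>n. \<Sum>j<n. (\<gamma> j * blinfun_apply (es j) x) *\<^sub>R e j) \<longlonglongrightarrow> y
             \<and> norm y \<le> C * M * norm x))"

definition weak_star_lim ::
    "(nat \<Rightarrow> ('a::real_normed_vector \<Rightarrow>\<^sub>L real)) \<Rightarrow> ('a \<Rightarrow>\<^sub>L real) \<Rightarrow> bool" where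
  "weak_star_lim f y \<longleftrightarrow>
     (\<forall>x. (\<lambda>n. blinfun_apply (f n) x) \<longlonglongrightarrow> blinfun_apply y x)"

definition weak_star_schauder_basis ::
    "(nat \<Rightarrow> 'a::real_normed_vector) \<Rightarrow> (nat \<Rightarrow> ('a \<Rightarrow>\<^sub>L real)) \<Rightarrow> bool" where
  "weak_star_schauder_basis e es \<longleftrightarrow>
     (\<forall>xs. weak_star_lim (\<lambda>n. \<Sum>j<n. blinfun_apply xs (e j) *\<^sub>R es j) xs)"

definition unconditional_weak_star ::
    "(nat \<Rightarrow> 'a::real_normed_vector) \<Rightarrow> (nat \<Rightarrow> ('a \<Rightarrow>\<^sub>L real)) \<Rightarrow> bool" where
  "unconditional_weak_star e es \<longleftrightarrow>
     (\<exists>C\<ge>1. \<forall>xs (\<gamma>::nat \<Rightarrow> real) M. (\<forall>j. \<bar>\<gamma> j\<bar> \<le> M) \<longrightarrow>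
        (\<exists>y. weak_star_lim (\<lambda>n. \<Sum>j<n. (\<gamma> j * blinfun_apply xs (e j)) *\<^sub>R es j) y
             \<and> norm y \<le> C * M * norm xs))"

definition proj ::
    "(nat \<Rightarrow> 'a::real_normed_vector) \<Rightarrow> (nat \<Rightarrow> ('a \<Rightarrow>\<^sub>L real)) \<Rightarrow> nat set
       \<Rightarrow> ('a \<Rightarrow>\<^sub>L real) \<Rightarrow> ('a \<Rightarrow>\<^sub>L real)" where
  "proj e es A xs =
     (THE y. weak_star_lim (\<lambda>n. \<Sum>j\<in>A \<inter> {..<n}. blinfun_apply xs (e j) *\<^sub>R es j) y)"

definition condition_C ::
    "(nat \<Rightarrow> 'a::real_normed_vector) \<Rightarrow> (nat \<Rightarrow> ('a \<Rightarrow>\<^sub>L real)) \<Rightarrow> bool" where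
  "condition_C e es \<longleftrightarrow>
     (\<forall>\<Lambda> (\<theta>::real). infinite \<Lambda> \<and> \<theta> > 0 \<longrightarrow>
       (\<exists>\<A> :: nat \<Rightarrow> nat set. disjoint_family \<A> \<and> (\<forall>j. infinite (\<A> j) \<and> \<A> j \<subseteq> \<Lambda>) \<and>
          (\<forall>xs :: nat \<Rightarrow> ('a \<Rightarrow>\<^sub>L real). (\<forall>j. norm (xs j) \<le> 1) \<longrightarrow>
             (\<exists>a :: nat \<Rightarrow> real. summable (\<lambda>j. \<bar>a j\<bar>) \<and> (\<Sum>j. \<bar>a j\<bar>) = 1 \<and>
                (\<exists>y. weak_star_lim (\<lambda>n. \<Sum>j<n. a j *\<^sub>R proj e es (\<A> j) (xs j)) y
                     \<and> norm y \<le> \<theta>)))))"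

end

theory Submission
  imports Defs
begin

lemma wsl_unique:
  assumes "weak_star_lim f y" "weak_star_lim f y'" shows "y = y'"
proof (rule blinfun_eqI)
  fix x show "blinfun_apply y x = blinfun_apply y' x"
    using assms unfolding weak_star_lim_def by (meson LIMSEQ_unique)
qed

lemma eventually_const_lim:
  fixes f :: "nat \<Rightarrow> 'b::t2_space"
  assumes "f \<longlonglongrightarrow> L" "\<And>n. n \<ge> N \<Longrightarrow> f n = c" shows "L = c"
proof -
  have "f \<longlonglongrightarrow> c"
    by (rule tendsto_eventually) (use assms(2) in \<open>auto simp: eventually_sequentially\<close>)
  then show ?thesis using assms(1) LIMSEQ_unique by blast
qed

lemma delta:
  assumes "schauder_basis e" "coordinate_functionals e es"
  shows "blinfun_apply (es j) (e k) = (if j = k then 1 else 0)"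
proof -
  obtain c where u: "\<And>c'. (\<lambda>n. \<Sum>j<n. c' j *\<^sub>R e j) \<longlonglongrightarrow> e k \<Longrightarrow> c' = c"
    using assms(1) unfolding schauder_basis_def by metis
  have 1: "(\<lambda>n. \<Sum>j<n. blinfun_apply (es j) (e k) *\<^sub>R e j) \<longlonglongrightarrow> e k"
    using assms(2) unfolding coordinate_functionals_def by blast
  have "(\<lambda>n. \<Sum>j<n. (if j = k then 1 else 0) *\<^sub>R e j) \<longlonglongrightarrow> e k"
  proof (rule tendsto_eventually)
    show "\<forall>\<^sub>F n in sequentially. (\<Sum>j<n. (if j = k then 1 else 0) *\<^sub>R e j) = e k"
    proof -
      have h: "\<And>j. (if j = k then 1 else 0) *\<^sub>R e j = (if j = k then e k else 0)" by simp
      show ?thesis unfolding eventually_sequentially h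
        by (rule exI[of _ "Suc k"]) (auto simp: sum.delta)
    qed
  qed
  with 1 u have "(\<lambda>j. blinfun_apply (es j) (e k)) = (\<lambda>j. if j = k then 1 else 0)"
    by metis
  then show ?thesis by metis
qed

lemma proj_prop:
  assumes "\<forall>xs (\<gamma>::nat \<Rightarrow> real) M. (\<forall>j. \<bar>\<gamma> j\<bar> \<le> M) \<longrightarrow>
        (\<exists>y. weak_star_lim (\<lambda>n. \<Sum>j<n. (\<gamma> j * blinfun_apply xs (e j)) *\<^sub>R es j) y
             \<and> norm y \<le> C * M * norm xs)"
  shows "weak_star_lim (\<lambda>n. \<Sum>j\<in>A \<inter> {..<n}. blinfun_apply xs (e j) *\<^sub>R es j) (proj e es A xs)
     \<and> norm (proj e es A xs) \<le> C * norm xs"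
proof -
  have g: "\<forall>j. \<bar>(if j \<in> A then 1 else 0::real)\<bar> \<le> 1" by simp
  obtain y where y: "weak_star_lim (\<lambda>n. \<Sum>j<n. ((if j \<in> A then 1 else 0) * blinfun_apply xs (e j)) *\<^sub>R es j) y"
     "norm y \<le> C * 1 * norm xs"
    using spec[OF spec[OF spec[OF assms, of xs], of "\<lambda>j. if j \<in> A then 1 else 0"], of 1] g by blast
  have eq: "(\<lambda>n. \<Sum>j<n. ((if j \<in> A then 1 else 0) * blinfun_apply xs (e j)) *\<^sub>R es j)
        = (\<lambda>n. \<Sum>j\<in>A \<inter> {..<n}. blinfun_apply xs (e j) *\<^sub>R es j)"
  proof (rule ext)
    fix n
    have "(\<Sum>j\<in>A \<inter> {..<n}. blinfun_apply xs (e j) *\<^sub>R es j) = (\<Sum>j\<in>{..<n}. if j \<in> A then blinfun_apply xs (e j) *\<^sub>R es j else 0)"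
      using sum.inter_restrict[of "{..<n}" "\<lambda>j. blinfun_apply xs (e j) *\<^sub>R es j" A]
      by (simp add: Int_commute)
    then show "(\<Sum>j<n. ((if j \<in> A then 1 else 0) * blinfun_apply xs (e j)) *\<^sub>R es j)
        = (\<Sum>j\<in>A \<inter> {..<n}. blinfun_apply xs (e j) *\<^sub>R es j)"
      by (auto intro!: sum.cong)
  qed
  have w: "weak_star_lim (\<lambda>n. \<Sum>j\<in>A \<inter> {..<n}. blinfun_apply xs (e j) *\<^sub>R es j) y"
    using y(1) eq by simp
  have "proj e es A xs = y"
    unfolding proj_def using w wsl_unique by blast
  then show ?thesis using w y(2) by simp
qed

lemma proj_coord:
  assumes "schauder_basis e" "coordinate_functionals e es"
    and "weak_star_lim (\<lambda>n. \<Sum>j\<in>A \<inter> {..<n}. blinfun_apply xs (e j) *\<^sub>R es j) p"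
  shows "blinfun_apply p (e k) = (if k \<in> A then blinfun_apply xs (e k) else 0)"
proof -
  have t: "(\<lambda>n. \<Sum>j\<in>A \<inter> {..<n}. blinfun_apply xs (e j) * blinfun_apply (es j) (e k)) \<longlonglongrightarrow> blinfun_apply p (e k)"
    using assms(3) unfolding weak_star_lim_def by (simp add: blinfun.sum_left blinfun.scaleR_left)
  show ?thesis
  proof (rule eventually_const_lim[OF t])
    fix n assume "n \<ge> Suc k"
    then show "(\<Sum>j\<in>A \<inter> {..<n}. blinfun_apply xs (e j) * blinfun_apply (es j) (e k)) =
          (if k \<in> A then blinfun_apply xs (e k) else 0)"
      by (simp add: delta[OF assms(1,2)] if_distrib sum.delta cong: if_cong)
  qed
qed

lemma coord_ext:
  fixes f g :: "'a::real_normed_vector \<Rightarrow>\<^sub>L real"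
  assumes "weak_star_schauder_basis e es" "\<And>k. blinfun_apply f (e k) = blinfun_apply g (e k)"
  shows "f = g"
proof -
  have "weak_star_lim (\<lambda>n. \<Sum>j<n. blinfun_apply f (e j) *\<^sub>R es j) f"
       "weak_star_lim (\<lambda>n. \<Sum>j<n. blinfun_apply g (e j) *\<^sub>R es j) g"
    using assms(1) unfolding weak_star_schauder_basis_def by auto
  then show ?thesis using assms(2) wsl_unique by simp
qed

theorem lemma3p2:
  fixes e :: "nat \<Rightarrow> 'a::banach"
    and es :: "nat \<Rightarrow> ('a \<Rightarrow>\<^sub>L real)"
    and \<Lambda> :: "nat set"
    and \<eta> :: real
    and \<phi> :: "('a \<Rightarrow>\<^sub>L real) \<Rightarrow>\<^sub>L real"
  assumes "schauder_basis e"
    and "\<forall>j. norm (e j) = 1"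
    and "coordinate_functionals e es"
    and "unconditional_basis e es"
    and "weak_star_schauder_basis e es"
    and "unconditional_weak_star e es"
    and "condition_C e es"
    and "infinite \<Lambda>"
    and "\<eta> > 0"
  shows "\<exists>\<A>. \<A> \<subseteq> \<Lambda> \<and> infinite \<A> \<and>
           (\<forall>xs :: 'a \<Rightarrow>\<^sub>L real. norm xs \<le> 1 \<longrightarrow>
              \<bar>blinfun_apply \<phi> (proj e es \<A> xs)\<bar> \<le> \<eta>)"
proof (rule ccontr)
  assume neg: "\<not> ?thesis"
  then have fail: "\<And>A. A \<subseteq> \<Lambda> \<Longrightarrow> infinite A \<Longrightarrow>
      \<exists>xs. norm xs \<le> 1 \<and> \<bar>blinfun_apply \<phi> (proj e es A xs)\<bar> > \<eta>"
    by (auto simp: not_le)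
  obtain C where C1: "C \<ge> 1" and Cp: "\<forall>xs (\<gamma>::nat \<Rightarrow> real) M. (\<forall>j. \<bar>\<gamma> j\<bar> \<le> M) \<longrightarrow>
        (\<exists>y. weak_star_lim (\<lambda>n. \<Sum>j<n. (\<gamma> j * blinfun_apply xs (e j)) *\<^sub>R es j) y
             \<and> norm y \<le> C * M * norm xs)"
    using assms(6) unfolding unconditional_weak_star_def by (elim exE conjE) (rule that)
  define \<theta> where "\<theta> = \<eta> / (2 * (norm \<phi> + 1) * C)"
  have \<theta>pos: "\<theta> > 0" unfolding \<theta>_def using assms(9) C1
    by (simp add: add_nonneg_pos)
  obtain \<A> :: "nat \<Rightarrow> nat set" where dis: "disjoint_family \<A>"
    and Ai: "\<forall>j. infinite (\<A> j) \<and> \<A> j \<subseteq> \<Lambda>"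
    and AC: "\<forall>xs :: nat \<Rightarrow> ('a \<Rightarrow>\<^sub>L real). (\<forall>j. norm (xs j) \<le> 1) \<longrightarrow>
             (\<exists>a :: nat \<Rightarrow> real. summable (\<lambda>j. \<bar>a j\<bar>) \<and> (\<Sum>j. \<bar>a j\<bar>) = 1 \<and>
                (\<exists>y. weak_star_lim (\<lambda>n. \<Sum>j<n. a j *\<^sub>R proj e es (\<A> j) (xs j)) y
                     \<and> norm y \<le> \<theta>))"
    using mp[OF spec[OF spec[OF assms(7)[unfolded condition_C_def], of \<Lambda>], of \<theta>] conjI[OF assms(8) \<theta>pos]]
    by (elim exE conjE) (rule that)
  define X where "X j = (SOME xs. norm xs \<le> 1 \<and> \<bar>blinfun_apply \<phi> (proj e es (\<A> j) xs)\<bar> > \<eta>)" for j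
  have X: "norm (X j) \<le> 1 \<and> \<bar>blinfun_apply \<phi> (proj e es (\<A> j) (X j))\<bar> > \<eta>" for j
    unfolding X_def by (rule someI_ex) (rule fail[of "\<A> j"]; use Ai in blast)
  have Xn: "\<forall>j. norm (X j) \<le> 1" using X by blast
  obtain a y where asum: "summable (\<lambda>j. \<bar>a j\<bar>)" "(\<Sum>j. \<bar>a j\<bar>) = 1"
    and ylim: "weak_star_lim (\<lambda>n. \<Sum>j<n. a j *\<^sub>R proj e es (\<A> j) (X j)) y"
    and ynorm: "norm y \<le> \<theta>"
    using mp[OF spec[OF AC, of X] Xn] by (elim exE conjE) (rule that)
  define P where "P j = proj e es (\<A> j) (X j)" for j
  have Pw: "weak_star_lim (\<lambda>n. \<Sum>i\<in>\<A> j \<inter> {..<n}. blinfun_apply (X j) (e i) *\<^sub>R es i) (P j)"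
    and Pn0: "norm (P j) \<le> C * norm (X j)" for j
    using proj_prop[OF Cp, where A="\<A> j" and xs="X j"] unfolding P_def by auto
  have Pn: "norm (P j) \<le> C" for j
  proof -
    have "C * norm (X j) \<le> C * 1" using X[of j] C1 by (intro mult_left_mono) auto
    then show ?thesis using Pn0[of j] by simp
  qed
  have Pc: "blinfun_apply (P j) (e k) = (if k \<in> \<A> j then blinfun_apply (X j) (e k) else 0)" for j k
    by (rule proj_coord[OF assms(1,3) Pw])
  define s where "s j = sgn (blinfun_apply \<phi> (P j))" for j
  define J where "J k = (THE j. k \<in> \<A> j)" for k
  have uniq: "k \<in> \<A> j \<Longrightarrow> k \<in> \<A> j' \<Longrightarrow> j = j'" for k j j'
    using dis unfolding disjoint_family_on_def by blast
  have J: "k \<in> \<A> j \<Longrightarrow> J k = j" for j k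
    unfolding J_def using uniq by blast
  have yc: "blinfun_apply y (e k) = (if \<exists>j. k \<in> \<A> j then a (J k) * blinfun_apply (X (J k)) (e k) else 0)" for k
  proof -
    have t: "(\<lambda>n. \<Sum>j<n. a j * blinfun_apply (P j) (e k)) \<longlonglongrightarrow> blinfun_apply y (e k)"
      using ylim unfolding weak_star_lim_def P_def by (simp add: blinfun.sum_left blinfun.scaleR_left)
    show ?thesis
    proof (cases "\<exists>j. k \<in> \<A> j")
      case True
      then obtain j0 where j0: "k \<in> \<A> j0" by blast
      have f: "a j * blinfun_apply (P j) (e k) = (if j = j0 then a j0 * blinfun_apply (X j0) (e k) else 0)" for j
      proof (cases "j = j0")
        case True then show ?thesis by (simp add: Pc j0)
      next
        case False then have "k \<notin> \<A> j" using uniq j0 by blast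
        then show ?thesis using False by (simp add: Pc)
      qed
      have "blinfun_apply y (e k) = a j0 * blinfun_apply (X j0) (e k)"
        by (rule eventually_const_lim[OF t, of "Suc j0"]) (simp add: f sum.delta)
      then show ?thesis using True J[OF j0] by simp
    next
      case False
      have "blinfun_apply y (e k) = 0"
        by (rule eventually_const_lim[OF t, of 0]) (use False in \<open>simp add: Pc\<close>)
      then show ?thesis using False by simp
    qed
  qed
  define \<gamma> where "\<gamma> k = (if \<exists>j. k \<in> \<A> j then sgn (a (J k)) * s (J k) else 0)" for k
  have \<gamma>b: "\<forall>k. \<bar>\<gamma> k\<bar> \<le> 1"
    unfolding \<gamma>_def s_def by (auto simp: sgn_if abs_mult)
  obtain y' where y'w: "weak_star_lim (\<lambda>n. \<Sum>j<n. (\<gamma> j * blinfun_apply y (e j)) *\<^sub>R es j) y'"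
    and y'n: "norm y' \<le> C * 1 * norm y"
    using Cp \<gamma>b by blast
  have y'c: "blinfun_apply y' (e k) = \<gamma> k * blinfun_apply y (e k)" for k
  proof -
    have t: "(\<lambda>n. \<Sum>j<n. \<gamma> j * blinfun_apply y (e j) * blinfun_apply (es j) (e k)) \<longlonglongrightarrow> blinfun_apply y' (e k)"
      using y'w unfolding weak_star_lim_def by (simp add: blinfun.sum_left blinfun.scaleR_left)
    show ?thesis
    proof (rule eventually_const_lim[OF t, of "Suc k"])
      fix n assume n: "n \<ge> Suc k"
      have h: "\<And>j. \<gamma> j * blinfun_apply y (e j) * blinfun_apply (es j) (e k) = (if j = k then \<gamma> k * blinfun_apply y (e k) else 0)"
        by (simp add: delta[OF assms(1,3)])
      show "(\<Sum>j<n. \<gamma> j * blinfun_apply y (e j) * blinfun_apply (es j) (e k)) = \<gamma> k * blinfun_apply y (e k)"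
        unfolding h using n by (simp add: sum.delta)
    qed
  qed
  have sb: "\<bar>s j\<bar> \<le> 1" for j unfolding s_def by (auto simp: sgn_if)
  have summ1: "summable (\<lambda>j. \<bar>a j\<bar> * C)" using asum(1) by (rule summable_mult2)
  have zs: "summable (\<lambda>j. (\<bar>a j\<bar> * s j) *\<^sub>R P j)"
  proof (rule summable_comparison_test[OF _ summ1])
    show "\<exists>N. \<forall>n\<ge>N. norm ((\<bar>a n\<bar> * s n) *\<^sub>R P n) \<le> \<bar>a n\<bar> * C"
    proof (intro exI allI impI)
      fix n
      have "norm ((\<bar>a n\<bar> * s n) *\<^sub>R P n) = \<bar>a n\<bar> * \<bar>s n\<bar> * norm (P n)" by (simp add: abs_mult)
      also have "\<dots> \<le> \<bar>a n\<bar> * 1 * C"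
        by (intro mult_mono sb Pn) auto
      finally show "norm ((\<bar>a n\<bar> * s n) *\<^sub>R P n) \<le> \<bar>a n\<bar> * C" by simp
    qed
  qed
  define z where "z = (\<Sum>j. (\<bar>a j\<bar> * s j) *\<^sub>R P j)"
  have zc: "blinfun_apply z (e k) = blinfun_apply y' (e k)" for k
  proof -
    have z1: "blinfun_apply z (e k) = (\<Sum>j. (\<bar>a j\<bar> * s j) * blinfun_apply (P j) (e k))"
      unfolding z_def using bounded_linear.suminf[OF blinfun.bounded_linear_left zs, of "e k"]
      by (simp add: blinfun.scaleR_left)
    show ?thesis
    proof (cases "\<exists>j. k \<in> \<A> j")
      case True
      then obtain j0 where j0: "k \<in> \<A> j0" by blast
      have f: "(\<lambda>j. (\<bar>a j\<bar> * s j) * blinfun_apply (P j) (e k)) =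
           (\<lambda>j. if j = j0 then (\<bar>a j0\<bar> * s j0) * blinfun_apply (X j0) (e k) else 0)"
      proof (rule ext)
        fix j show "(\<bar>a j\<bar> * s j) * blinfun_apply (P j) (e k) = (if j = j0 then (\<bar>a j0\<bar> * s j0) * blinfun_apply (X j0) (e k) else 0)"
        proof (cases "j = j0")
          case True then show ?thesis by (simp add: Pc j0)
        next
          case False then have "k \<notin> \<A> j" using uniq j0 by blast
          then show ?thesis using False by (simp add: Pc)
        qed
      qed
      have "blinfun_apply z (e k) = (\<bar>a j0\<bar> * s j0) * blinfun_apply (X j0) (e k)"
        unfolding z1 f using sums_single[of j0 "\<lambda>_. (\<bar>a j0\<bar> * s j0) * blinfun_apply (X j0) (e k)"]
        by (simp add: sums_iff)
      moreover have "blinfun_apply y' (e k) = (\<bar>a j0\<bar> * s j0) * blinfun_apply (X j0) (e k)"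
      proof -
        have "sgn (a j0) * a j0 = \<bar>a j0\<bar>" by (simp add: sgn_if)
        moreover have "sgn (a j0) * s j0 * (a j0 * blinfun_apply (X j0) (e k)) = (sgn (a j0) * a j0) * s j0 * blinfun_apply (X j0) (e k)"
          by (simp add: mult_ac)
        ultimately have "sgn (a j0) * s j0 * (a j0 * blinfun_apply (X j0) (e k)) = (\<bar>a j0\<bar> * s j0) * blinfun_apply (X j0) (e k)"
          by simp
        then show ?thesis unfolding y'c yc \<gamma>_def using True J[OF j0] by simp
      qed
      ultimately show ?thesis by simp
    next
      case False
      then show ?thesis unfolding z1 y'c yc \<gamma>_def by (simp add: Pc)
    qed
  qed
  have zy: "z = y'" by (rule coord_ext[OF assms(5)]) (use zc in simp)
  have phiz: "blinfun_apply \<phi> z = (\<Sum>j. (\<bar>a j\<bar> * s j) * blinfun_apply \<phi> (P j))"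
    unfolding z_def using bounded_linear.suminf[OF blinfun.bounded_linear_right zs, of \<phi>]
    by (simp add: blinfun.scaleR_right)
  have sphi: "s j * blinfun_apply \<phi> (P j) = \<bar>blinfun_apply \<phi> (P j)\<bar>" for j
    unfolding s_def by (simp add: sgn_if)
  have summ2: "summable (\<lambda>j. \<bar>a j\<bar> * (norm \<phi> * C))" using asum(1) by (rule summable_mult2)
  have s3: "summable (\<lambda>j. \<bar>a j\<bar> * \<bar>blinfun_apply \<phi> (P j)\<bar>)"
  proof (rule summable_comparison_test[OF _ summ2])
    show "\<exists>N. \<forall>n\<ge>N. norm (\<bar>a n\<bar> * \<bar>blinfun_apply \<phi> (P n)\<bar>) \<le> \<bar>a n\<bar> * (norm \<phi> * C)"
    proof (intro exI allI impI)
      fix n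
      have "\<bar>blinfun_apply \<phi> (P n)\<bar> \<le> norm \<phi> * norm (P n)" using norm_blinfun[of \<phi> "P n"] by simp
      also have "\<dots> \<le> norm \<phi> * C" by (intro mult_left_mono Pn) auto
      finally show "norm (\<bar>a n\<bar> * \<bar>blinfun_apply \<phi> (P n)\<bar>) \<le> \<bar>a n\<bar> * (norm \<phi> * C)"
        by (simp add: abs_mult mult_left_mono)
    qed
  qed
  have s4: "summable (\<lambda>j. \<bar>a j\<bar> * \<eta>)" using asum(1) by (rule summable_mult2)
  have "\<eta> = (\<Sum>j. \<bar>a j\<bar> * \<eta>)" using suminf_mult2[OF asum(1), of \<eta>] asum(2) by simp
  also have "\<dots> \<le> (\<Sum>j. \<bar>a j\<bar> * \<bar>blinfun_apply \<phi> (P j)\<bar>)"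
    by (rule suminf_le[OF _ s4 s3]) (rule mult_left_mono, use X P_def less_imp_le in auto)
  also have "\<dots> = blinfun_apply \<phi> z"
    unfolding phiz by (simp add: mult.assoc sphi)
  also have "\<dots> \<le> norm \<phi> * norm z" using norm_blinfun[of \<phi> z] by simp
  also have "\<dots> \<le> norm \<phi> * (C * \<theta>)"
  proof (rule mult_left_mono)
    have "C * norm y \<le> C * \<theta>" using ynorm C1 by (intro mult_left_mono) auto
    then show "norm z \<le> C * \<theta>" using zy y'n by simp
  qed simp
  also have "\<dots> = norm \<phi> * \<eta> / (2 * (norm \<phi> + 1))"
  proof -
    have np: "norm \<phi> + 1 > 0" by (simp add: add_nonneg_pos)
    have "C * \<theta> = \<eta> / (2 * (norm \<phi> + 1))"
    proof -
      have "C \<noteq> 0" using C1 by simp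
      moreover have "2 * (norm \<phi> + 1) \<noteq> 0" using np by simp
      ultimately show ?thesis unfolding \<theta>_def by (simp add: mult.commute[of _ C] mult.assoc[symmetric])
    qed
    then show ?thesis by simp
  qed
  also have "\<dots> < \<eta>"
  proof -
    have np: "norm \<phi> + 1 > 0" by (simp add: add_nonneg_pos)
    have "norm \<phi> * \<eta> < 2 * (norm \<phi> + 1) * \<eta>" using assms(9) np
      by (simp add: algebra_simps add_nonneg_pos)
    then show ?thesis using np by (simp add: divide_less_eq mult.commute)
  qed
  finally show False by simp
qed

end
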